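(* Let $K_1, K_2, K_3 > 0$ and, for $h > 0$ and $j = 1,2,3$, let $\Omega_j(h) = \sqrt{K_j \tanh(K_j h)}$. There exists a positive and finite value of $h$ such that $\Omega_1(h) + \Omega_2(h) = \Omega_3(h)$ if and only if $$K_1 + K_2 < K_3 < \big(\sqrt{K_1} + \sqrt{K_2}\big)^2.$$ When this pair of inequalities is satisfied, the corresponding value of $h$ is unique.
   Context: Physically, $K_j$ are positive eigenvalue square roots ("wavenumbers") of the negative horizontal Laplacian with Neumann boundary conditions on the cross-section of a cylinder, $h$ is the dimensionless fluid depth, and $\Omega_j(h)$ is the angular frequency given by the finite-depth gravity-wave dispersion relation $\Omega_j^2 = K_j\tanh(K_j h)$. The theorem is a purely real-analytic statement about these functions. *)

theory Defs
  imports Complex_Main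
begin

definition Omega :: "real \<Rightarrow> real \<Rightarrow> real" where
  "Omega K h = sqrt (K * tanh (K * h))"

end

theory Submission
  imports Defs
begin

lemma sinh_lt_xcosh: assumes "(x::real) > 0" shows "sinh x < x * cosh x"
proof -
  have "(\<lambda>t. t * cosh t - sinh t) 0 < (\<lambda>t. t * cosh t - sinh t) x"
  proof (rule DERIV_pos_imp_increasing_open[OF assms])
    fix t :: real assume "0 < t" "t < x"
    show "\<exists>y. ((\<lambda>t. t * cosh t - sinh t) has_real_derivative y) (at t) \<and> y > 0"
      by (rule exI[of _ "t * sinh t"]) (use \<open>0<t\<close> in \<open>auto intro!: derivative_eq_intros\<close>)
  qed (intro continuous_intros)
  then show ?thesis by simp
qed

lemma sinh_gt_x: assumes "(x::real) > 0" shows "x < sinh x"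
proof -
  have "(\<lambda>t. sinh t - t) 0 < (\<lambda>t. sinh t - t) x"
  proof (rule DERIV_pos_imp_increasing_open[OF assms])
    fix t :: real assume "0 < t" "t < x"
    have "cosh t > 1" using cosh_real_ge_1[of t] cosh_real_one_iff[of t] \<open>0<t\<close> by linarith
    then show "\<exists>y. ((\<lambda>t. sinh t - t) has_real_derivative y) (at t) \<and> y > 0"
      by (intro exI[of _ "cosh t - 1"]) (auto intro!: derivative_eq_intros)
  qed (intro continuous_intros)
  then show ?thesis by simp
qed

lemma sinh_div_mono: assumes "0 < x" "x < (y::real)" shows "sinh x / x < sinh y / y"
proof (rule DERIV_pos_imp_increasing_open[OF assms(2)])
  fix t :: real assume "x < t" "t < y"
  hence t: "t > 0" using assms by linarith
  have "((\<lambda>t. sinh t / t) has_real_derivative (t * cosh t - sinh t) / t^2) (at t)"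
    using t by (auto intro!: derivative_eq_intros simp: field_simps power2_eq_square)
  moreover have "(t * cosh t - sinh t) / t^2 > 0" using sinh_lt_xcosh[OF t] t by simp
  ultimately show "\<exists>d. ((\<lambda>t. sinh t / t) has_real_derivative d) (at t) \<and> d > 0" by blast
next
  show "continuous_on {x..y} (\<lambda>t. sinh t / t)" using assms by (intro continuous_intros) auto
qed

lemma tanh_div_anti: assumes "0 < x" "x < (y::real)" shows "tanh y / y < tanh x / x"
proof -
  have "(\<lambda>t. - (tanh t / t)) x < (\<lambda>t. - (tanh t / t)) y"
  proof (rule DERIV_pos_imp_increasing_open[OF assms(2)])
    fix t :: real assume "x < t" "t < y"
    hence t: "t > 0" using assms by linarith
    have "((\<lambda>t. - (tanh t / t)) has_real_derivative - (((1 - tanh t ^ 2) * t - tanh t) / t^2)) (at t)"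
      using t by (auto intro!: derivative_eq_intros simp: field_simps power2_eq_square)
    moreover have "- (((1 - tanh t ^ 2) * t - tanh t) / t^2) > 0"
    proof -
      have c: "cosh t \<ge> 1" by (rule cosh_real_ge_1)
      have "sinh t * cosh t > t" using sinh_gt_x[OF t] c t
        by (smt (verit) mult_le_cancel_left1 sinh_real_pos_iff)
      hence "t * (cosh t * (cosh t * cosh t)) < cosh t * (cosh t * sinh t) + t * (cosh t * (sinh t * sinh t))"
      proof -
        assume a: "t < sinh t * cosh t"
        have "cosh t * cosh t = sinh t * sinh t + 1" using cosh_square_eq[of t] by (simp add: power2_eq_square)
        hence "t * (cosh t * (cosh t * cosh t)) = cosh t * (t * (sinh t * sinh t) + t)" by (simp add: algebra_simps)
        also have "\<dots> < cosh t * (t * (sinh t * sinh t) + sinh t * cosh t)"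
          using a by (intro mult_strict_left_mono) auto
        finally show ?thesis by (simp add: algebra_simps)
      qed
      hence "(1 - tanh t ^ 2) * t < tanh t"
        by (simp add: tanh_def field_simps power2_eq_square)
      then show ?thesis using t by (simp add: divide_simps)
    qed
    ultimately show "\<exists>d. ((\<lambda>t. - (tanh t / t)) has_real_derivative d) (at t) \<and> d > 0" by blast
  next
    show "continuous_on {x..y} (\<lambda>t. - (tanh t / t))" using assms by (intro continuous_intros) auto
  qed
  then show ?thesis by simp
qed

lemma one_minus_tanh_sq: "1 - tanh (x::real) ^ 2 = 1 / cosh x ^ 2"
proof -
  have "cosh x ^ 2 > 0" by simp
  thus ?thesis using cosh_square_eq[of x] by (simp add: tanh_def power_divide divide_simps)
qed

lemma sc_mono: assumes "0 < x" "x < (y::real)" shows "sinh x * cosh x / x < sinh y * cosh y / y"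
proof -
  have "sinh (2*x) / (2*x) < sinh (2*y) / (2*y)" using assms by (intro sinh_div_mono) auto
  thus ?thesis by (simp add: sinh_double)
qed

lemma ratio_mono:
  assumes "0 < a" "a < (b::real)" "0 < h1" "h1 < h2"
  shows "tanh (a*h1) / tanh (b*h1) < tanh (a*h2) / tanh (b*h2)"
proof (rule DERIV_pos_imp_increasing_open[OF assms(4)])
  fix h :: real assume "h1 < h" "h < h2"
  hence h: "h > 0" using assms by linarith
  have bpos: "b > 0" using assms by linarith
  let ?D = "(a * (1 - tanh (a*h)^2) * tanh (b*h) - tanh (a*h) * (b * (1 - tanh (b*h)^2))) / tanh (b*h)^2"
  have "((\<lambda>h. tanh (a*h) / tanh (b*h)) has_real_derivative ?D) (at h)"
    using h bpos by (auto intro!: derivative_eq_intros simp: field_simps power2_eq_square)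
  moreover have "?D > 0"
  proof -
    have "sinh (a*h) * cosh (a*h) / (a*h) < sinh (b*h) * cosh (b*h) / (b*h)"
      using assms h by (intro sc_mono) auto
    hence k: "b * (sinh (a*h) * cosh (a*h)) < a * (sinh (b*h) * cosh (b*h))"
      using assms h bpos by (simp add: field_simps)
    have "b * (sinh (a*h) * cosh (a*h)) / (cosh (a*h)^2 * cosh (b*h)^2) < a * (sinh (b*h) * cosh (b*h)) / (cosh (a*h)^2 * cosh (b*h)^2)"
      using k by (intro divide_strict_right_mono) auto
    hence "tanh (a*h) * (b * (1 - tanh (b*h)^2)) < a * (1 - tanh (a*h)^2) * tanh (b*h)"
      unfolding one_minus_tanh_sq by (simp add: tanh_def field_simps power2_eq_square)
    moreover have "tanh (b*h)^2 > 0" using h bpos by simp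
    ultimately show ?thesis by simp
  qed
  ultimately show "\<exists>d. ((\<lambda>h. tanh (a*h) / tanh (b*h)) has_real_derivative d) (at h) \<and> d > 0" by blast
next
  show "continuous_on {h1..h2} (\<lambda>h. tanh (a*h) / tanh (b*h))"
    using assms by (intro continuous_intros) auto
qed

lemma Omega_pos: "K > 0 \<Longrightarrow> h > 0 \<Longrightarrow> Omega K h > 0"
  by (simp add: Omega_def)

lemma Omega_mono: assumes "0 < a" "a < b" "h > 0" shows "Omega a h < Omega b h"
proof -
  have "tanh (a*h) < tanh (b*h)" using assms by simp
  moreover have "tanh (a*h) > 0" using assms by simp
  ultimately have "a * tanh (a*h) < b * tanh (b*h)" using assms
    by (intro mult_strict_mono) auto
  thus ?thesis by (simp add: Omega_def)
qed

lemma Omega_le: assumes "0 < a" "a \<le> b" "h > 0" shows "Omega a h \<le> Omega b h"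
  using Omega_mono[of a b h] assms by (cases "a = b") auto

lemma Omega_div: assumes "K > 0" "h > 0" shows "Omega K h / K = sqrt (h * (tanh (K*h) / (K*h)))"
proof -
  have "Omega K h / K = sqrt (K * tanh (K*h)) / sqrt (K^2)" using assms by (simp add: Omega_def)
  also have "\<dots> = sqrt (K * tanh (K*h) / K^2)" by (simp add: real_sqrt_divide)
  also have "K * tanh (K*h) / K^2 = h * (tanh (K*h) / (K*h))" using assms by (simp add: field_simps power2_eq_square)
  finally show ?thesis .
qed

lemma Omega_subadd: assumes "0 < a" "0 < b" "h > 0" shows "Omega (a+b) h < Omega a h + Omega b h"
proof -
  have r: "Omega (a+b) h / (a+b) < Omega K h / K" if "0 < K" "K < a+b" for K
  proof -
    have "tanh ((a+b)*h) / ((a+b)*h) < tanh (K*h) / (K*h)"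
      using that assms by (intro tanh_div_anti) auto
    hence "h * (tanh ((a+b)*h) / ((a+b)*h)) < h * (tanh (K*h) / (K*h))"
      using assms by (intro mult_strict_left_mono) auto
    hence "sqrt (h * (tanh ((a+b)*h) / ((a+b)*h))) < sqrt (h * (tanh (K*h) / (K*h)))"
      by (rule real_sqrt_less_mono)
    moreover have "Omega (a+b) h / (a+b) = sqrt (h * (tanh ((a+b)*h) / ((a+b)*h)))"
      using assms by (intro Omega_div) auto
    moreover have "Omega K h / K = sqrt (h * (tanh (K*h) / (K*h)))"
      using assms that by (intro Omega_div) auto
    ultimately show ?thesis by simp
  qed
  have "a * (Omega (a+b) h / (a+b)) + b * (Omega (a+b) h / (a+b)) = (a+b) * (Omega (a+b) h / (a+b))"
    by (simp only: distrib_right)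
  also have "\<dots> = Omega (a+b) h" using assms by simp
  finally have "Omega (a+b) h = a * (Omega (a+b) h / (a+b)) + b * (Omega (a+b) h / (a+b))" by simp
  also have "\<dots> < a * (Omega a h / a) + b * (Omega b h / b)"
    using r[of a] r[of b] assms by (intro add_strict_mono mult_strict_left_mono) auto
  also have "\<dots> = Omega a h + Omega b h" using assms by simp
  finally show ?thesis .
qed

lemma Omega_ratio: assumes "0 < a" "0 < b" "h > 0"
  shows "Omega a h / Omega b h = sqrt (a / b * (tanh (a*h) / tanh (b*h)))"
  using assms by (simp add: Omega_def real_sqrt_divide[symmetric] real_sqrt_mult[symmetric] field_simps)

lemma Omega_ratio_mono: assumes "0 < a" "a < b" "0 < h1" "h1 < h2"
  shows "Omega a h1 / Omega b h1 < Omega a h2 / Omega b h2"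
proof -
  have "a / b * (tanh (a*h1) / tanh (b*h1)) < a / b * (tanh (a*h2) / tanh (b*h2))"
    using ratio_mono[OF assms] assms by (intro mult_strict_left_mono) auto
  thus ?thesis using assms by (simp add: Omega_ratio)
qed

lemma Omega_lim0: assumes "K > 0" shows "((\<lambda>h. tanh (K*h) / h) \<longlongrightarrow> K) (at_right 0)"
proof -
  have "((\<lambda>h. tanh (K*h)) has_field_derivative K * (1 - tanh (K*0)^2)) (at 0)"
    by (auto intro!: derivative_eq_intros)
  hence "((\<lambda>y. (tanh (K*y) - tanh (K*0)) / (y - 0)) \<longlongrightarrow> K * (1 - tanh (K*0)^2)) (at 0)"
    by (simp only: has_field_derivative_iff)
  hence "((\<lambda>h. tanh (K*h) / h) \<longlongrightarrow> K) (at 0)" by simp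
  thus ?thesis by (rule tendsto_within_subset) auto
qed

lemma Omega_lim_top: assumes "K > 0" shows "((\<lambda>h. Omega K h) \<longlongrightarrow> sqrt K) at_top"
proof -
  have "filterlim (\<lambda>h. K * h) at_top at_top"
    using assms by (intro filterlim_tendsto_pos_mult_at_top[OF tendsto_const] filterlim_ident)
  hence "((\<lambda>h. tanh (K*h)) \<longlongrightarrow> 1) at_top"
    by (rule filterlim_compose[OF tanh_real_at_top])
  hence "((\<lambda>h. sqrt (K * tanh (K*h))) \<longlongrightarrow> sqrt (K * 1)) at_top"
    by (intro tendsto_intros)
  thus ?thesis by (simp add: Omega_def)
qed

lemma necessary:
  assumes "K1 > 0" "K2 > 0" "K3 > 0" "h > 0" and root: "Omega K1 h + Omega K2 h = Omega K3 h"
  shows "K1 < K3 \<and> K2 < K3 \<and> K1 + K2 < K3 \<and> K3 < (sqrt K1 + sqrt K2)^2"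
proof -
  have p1: "Omega K1 h > 0" and p2: "Omega K2 h > 0" using assms Omega_pos by auto
  have l1: "K1 < K3"
  proof (rule ccontr)
    assume "\<not> K1 < K3" hence "Omega K3 h \<le> Omega K1 h" using assms by (intro Omega_le) auto
    thus False using root p2 by linarith
  qed
  have l2: "K2 < K3"
  proof (rule ccontr)
    assume "\<not> K2 < K3" hence "Omega K3 h \<le> Omega K2 h" using assms by (intro Omega_le) auto
    thus False using root p1 by linarith
  qed
  have l3: "K1 + K2 < K3"
  proof (rule ccontr)
    assume "\<not> K1 + K2 < K3" hence "Omega K3 h \<le> Omega (K1+K2) h" using assms by (intro Omega_le) auto
    thus False using root Omega_subadd[of K1 K2 h] assms by linarith
  qed
  define t where "t = tanh (K3*h)"
  have tpos: "t > 0" using assms by (simp add: t_def)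
  have o1: "Omega K1 h < sqrt K1 * sqrt t"
  proof -
    have "tanh (K1*h) < t" using l1 assms by (simp add: t_def)
    hence "K1 * tanh (K1*h) < K1 * t" using assms by simp
    thus ?thesis by (simp add: Omega_def real_sqrt_mult[symmetric])
  qed
  have o2: "Omega K2 h < sqrt K2 * sqrt t"
  proof -
    have "tanh (K2*h) < t" using l2 assms by (simp add: t_def)
    hence "K2 * tanh (K2*h) < K2 * t" using assms by simp
    thus ?thesis by (simp add: Omega_def real_sqrt_mult[symmetric])
  qed
  have "sqrt K3 * sqrt t < (sqrt K1 + sqrt K2) * sqrt t"
    using o1 o2 root by (simp add: Omega_def t_def real_sqrt_mult distrib_right)
  hence "sqrt K3 < sqrt K1 + sqrt K2" using tpos by simp
  hence "(sqrt K3)^2 < (sqrt K1 + sqrt K2)^2" using assms by (intro power_strict_mono) auto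
  hence "K3 < (sqrt K1 + sqrt K2)^2" using assms by simp
  thus ?thesis using l1 l2 l3 by blast
qed

lemma existence:
  assumes "K1 > 0" "K2 > 0" "K3 > 0" "K1 + K2 < K3" "K3 < (sqrt K1 + sqrt K2)^2"
  shows "\<exists>h>0. Omega K1 h + Omega K2 h = Omega K3 h"
proof -
  let ?F = "\<lambda>h. Omega K1 h + Omega K2 h - Omega K3 h"
  have lim0: "((\<lambda>h. sqrt (K1 * (tanh (K1*h) / h)) + sqrt (K2 * (tanh (K2*h) / h)) - sqrt (K3 * (tanh (K3*h) / h)))
      \<longlongrightarrow> sqrt (K1*K1) + sqrt (K2*K2) - sqrt (K3*K3)) (at_right 0)"
    using assms by (intro tendsto_intros Omega_lim0)
  have "sqrt (K1*K1) + sqrt (K2*K2) - sqrt (K3*K3) < 0" using assms by simp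
  from order_tendstoD(2)[OF lim0 this]
  have ev: "eventually (\<lambda>h. sqrt (K1 * (tanh (K1*h) / h)) + sqrt (K2 * (tanh (K2*h) / h)) - sqrt (K3 * (tanh (K3*h) / h)) < 0) (at_right 0)" .
  have "eventually (\<lambda>h. h > 0 \<and> ?F h < 0) (at_right 0)"
    using ev eventually_at_right_less[of "0::real"]
  proof eventually_elim
    case (elim h)
    have e: "sqrt (K * (tanh (K*h) / h)) = Omega K h / sqrt h" for K
      using elim(2) by (simp add: Omega_def real_sqrt_divide[symmetric] real_sqrt_mult[symmetric] field_simps)
    have "?F h / sqrt h < 0" using elim(1) unfolding e by (simp add: diff_divide_distrib add_divide_distrib)
    hence "?F h < 0" using elim(2) by (simp add: divide_less_0_iff)
    thus ?case using elim(2) by simp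
  qed
  then obtain a where a: "a > 0" "?F a < 0"
    using eventually_happens[of _ "at_right (0::real)"] by force
  have limT: "(?F \<longlongrightarrow> sqrt K1 + sqrt K2 - sqrt K3) at_top"
    using assms by (intro tendsto_intros Omega_lim_top)
  have "sqrt K3 < sqrt ((sqrt K1 + sqrt K2)^2)" using assms by (intro real_sqrt_less_mono)
  hence "sqrt K3 < sqrt K1 + sqrt K2" using assms by simp
  hence "sqrt K1 + sqrt K2 - sqrt K3 > 0" by simp
  from order_tendstoD(1)[OF limT this]
  have "eventually (\<lambda>h. ?F h > 0 \<and> h \<ge> a) at_top"
    using eventually_ge_at_top[of a] by eventually_elim auto
  then obtain b where b: "?F b > 0" "b \<ge> a"
    using eventually_happens[of _ "at_top :: real filter"] by force
  have "continuous_on {a..b} ?F" using a unfolding Omega_def by (intro continuous_intros) auto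
  from IVT'[of ?F a 0 b, OF _ _ b(2) this] a b obtain x where "a \<le> x" "x \<le> b" "?F x = 0" by auto
  thus ?thesis using a by (intro exI[of _ x]) auto
qed

theorem theorem1:
  fixes K1 K2 K3 :: real
  assumes "K1 > 0" and "K2 > 0" and "K3 > 0"
  shows "((\<exists>h>0. Omega K1 h + Omega K2 h = Omega K3 h) \<longleftrightarrow>
            (K1 + K2 < K3 \<and> K3 < (sqrt K1 + sqrt K2)^2))
       \<and> ((K1 + K2 < K3 \<and> K3 < (sqrt K1 + sqrt K2)^2) \<longrightarrow>
            (\<exists>!h. h > 0 \<and> Omega K1 h + Omega K2 h = Omega K3 h))"
proof -
  have uniq: "h1 = h2" if r1: "h1 > 0" "Omega K1 h1 + Omega K2 h1 = Omega K3 h1"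
    and r2: "h2 > 0" "Omega K1 h2 + Omega K2 h2 = Omega K3 h2" for h1 h2
  proof -
    have k: "K1 < K3" "K2 < K3" using necessary[OF assms r1] by auto
    have one: "Omega K1 h / Omega K3 h + Omega K2 h / Omega K3 h = 1"
      if "h > 0" "Omega K1 h + Omega K2 h = Omega K3 h" for h
    proof -
      have "Omega K3 h > 0" using that assms Omega_pos by auto
      thus ?thesis using that(2) by (simp add: add_divide_distrib[symmetric])
    qed
    have lt: "Omega K1 x / Omega K3 x + Omega K2 x / Omega K3 x < Omega K1 y / Omega K3 y + Omega K2 y / Omega K3 y"
      if "0 < x" "x < y" for x y
      using Omega_ratio_mono[of K1 K3 x y] Omega_ratio_mono[of K2 K3 x y] k that assms
      by (intro add_strict_mono) auto
    show ?thesis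
    proof (rule linorder_cases[of h1 h2])
      assume "h1 < h2" thus ?thesis using lt[of h1 h2] one[OF r1] one[OF r2] r1 by simp
    next
      assume "h2 < h1" thus ?thesis using lt[of h2 h1] one[OF r1] one[OF r2] r2 by simp
    qed
  qed
  show ?thesis
    using necessary[OF assms] existence[OF assms] uniq by blast
qed

end
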